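(* Fix $x\in\mathbb{R}^{n}$ and $u\in\mathbb{R}^{n_a}$, and assume that $J_i P^{-1} J_j^\top = 0$ for all $i\neq j$, where $P=P(x)$ and $J_i=J_i(x)$. Then for each contact $i$, the vector $\nu_{\kappa,i} - J_i P^{-1} J_i^\top \lambda_{\kappa,i}$ is independent of $\kappa>0$.
   Context: $P(x)\in\mathbb{R}^{n\times n}$ is symmetric positive definite and $q(x,u)\in\mathbb{R}^n$. There are $n_c$ contacts; for each contact $i$, $J_i(x)\in\mathbb{R}^{3\times n}$ is the contact Jacobian, $\phi_i(x)\in\mathbb{R}$ the signed distance, $\mu_i>0$ the friction coefficient, $\mathcal{F}_i=\{(\lambda_n,\lambda_t)\in\mathbb{R}\times\mathbb{R}^2:\|\lambda_t\|_2\le\mu_i\lambda_n\}$ the friction cone and $\mathcal{F}_i^*=\{(\nu_n,\nu_t):\|\nu_t\|_2\le\nu_n/\mu_i\}$ its dual, and $\psi_i(\nu)=-\tfrac12\log(\nu_n^2/\mu_i^2-\|\nu_t\|_2^2)$ on the interior of $\mathcal{F}_i^*$. For $\kappa>0$, the smoothed next state $x_\kappa^+$ minimizes $\tfrac12 (x^+)^\top P(x)x^+ + q(x,u)^\top x^+ + \kappa\sum_{i=1}^{n_c}\psi_i(\nu_i)$ subject to $\nu_i = J_i(x)(x^+-x)+[\phi_i(x),0,0]^\top$; $\nu_{\kappa,i}$ and the contact forces $\lambda_{\kappa,i}$ satisfy the KKT conditions $P(x)x_\kappa^+ + q(x,u) - \sum_{i} J_i(x)^\top\lambda_{\kappa,i}=0$,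 $\nu_{\kappa,i}=J_i(x)(x_\kappa^+-x)+[\phi_i(x),0,0]^\top$, $\lambda_{\kappa,i}\in\mathcal{F}_i$, $\nu_{\kappa,i}\in\mathcal{F}_i^*$, $\lambda_{\kappa,i}\circ\nu_{\kappa,i}=\kappa e$, with $a\circ b=(a^\top b,\,a_0b_1+b_0a_1)$ for $a=(a_0,a_1),b=(b_0,b_1)\in\mathbb{R}\times\mathbb{R}^2$ and $e=(1,0,0)$. *)

theory Defs
  imports "HOL-Analysis.Analysis"
begin

text \<open>Contact-frame vectors in R^3: component 1 is the normal part, components 2,3 the tangential part.\<close>

definition sym_pos_def_mat :: "real^'n^'n \<Rightarrow> bool" where
  "sym_pos_def_mat A \<longleftrightarrow> transpose A = A \<and> (\<forall>v. v \<noteq> 0 \<longrightarrow> v \<bullet> (A *v v) > 0)"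

definition friction_cone :: "real \<Rightarrow> (real^3) set" where
  "friction_cone mu = {l. sqrt ((l$2)^2 + (l$3)^2) \<le> mu * l$1}"

definition dual_friction_cone :: "real \<Rightarrow> (real^3) set" where
  "dual_friction_cone mu = {v. sqrt ((v$2)^2 + (v$3)^2) \<le> v$1 / mu}"

definition jordan_prod :: "real^3 \<Rightarrow> real^3 \<Rightarrow> real^3" where
  "jordan_prod a b = vector [a \<bullet> b, a$1 * b$2 + b$1 * a$2, a$1 * b$3 + b$1 * a$3]"

definition e_vec :: "real^3" where
  "e_vec = vector [1, 0, 0]"

text \<open>KKT conditions of the smoothed contact problem at state x, input u, smoothing kappa,
  with candidate next state xp, dual variables nu and contact forces lam.\<close>
definition smoothed_KKT ::
  "(real^'n \<Rightarrow> real^'n^'n) \<Rightarrow> (real^'n \<Rightarrow> real^'m \<Rightarrow> real^'n) \<Rightarrow>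
   ('c::finite \<Rightarrow> real^'n \<Rightarrow> real^'n^3) \<Rightarrow> ('c \<Rightarrow> real^'n \<Rightarrow> real) \<Rightarrow> ('c \<Rightarrow> real) \<Rightarrow>
   real^'n \<Rightarrow> real^'m \<Rightarrow> real \<Rightarrow> real^'n \<Rightarrow> ('c \<Rightarrow> real^3) \<Rightarrow> ('c \<Rightarrow> real^3) \<Rightarrow> bool" where
  "smoothed_KKT P q J phi mu x u kappa xp nu lam \<longleftrightarrow>
     P x *v xp + q x u - (\<Sum>i\<in>UNIV. transpose (J i x) *v lam i) = 0 \<and>
     (\<forall>i. nu i = J i x *v (xp - x) + vector [phi i x, 0, 0] \<and>
          lam i \<in> friction_cone (mu i) \<and>
          nu i \<in> dual_friction_cone (mu i) \<and>
          jordan_prod (lam i) (nu i) = kappa *\<^sub>R e_vec)"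

end

theory Submission
  imports Defs
begin

lemma inv_left:
  fixes A :: "real^'n^'n"
  assumes "sym_pos_def_mat A"
  shows "matrix_inv A ** A = mat 1"
proof -
  have "\<forall>v. A *v v = 0 \<longrightarrow> v = 0"
    using assms unfolding sym_pos_def_mat_def by force
  then have "invertible A"
    using matrix_left_invertible_ker invertible_left_inverse by metis
  then show ?thesis unfolding invertible_def matrix_inv_def
    by (metis (mono_tags, lifting) someI_ex)
qed

lemma key:
  fixes P :: "real^'n \<Rightarrow> real^'n^'n"
    and q :: "real^'n \<Rightarrow> real^'m \<Rightarrow> real^'n"
    and J :: "'c::finite \<Rightarrow> real^'n \<Rightarrow> real^'n^3"
  assumes spd: "sym_pos_def_mat (P x)"
    and decoupled: "\<And>i j. i \<noteq> j \<Longrightarrow> J i x ** matrix_inv (P x) ** transpose (J j x) = 0"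
    and kkt: "smoothed_KKT P q J phi mu x u kappa xp nu lam"
  shows "nu i - (J i x ** matrix_inv (P x) ** transpose (J i x)) *v lam i =
         - (J i x ** matrix_inv (P x)) *v q x u - J i x *v x + vector [phi i x, 0, 0]"
proof -
  define Pi where "Pi = matrix_inv (P x)"
  define S where "S = (\<Sum>j\<in>UNIV. transpose (J j x) *v lam j)"
  have L: "Pi ** P x = mat 1" using inv_left[OF spd] Pi_def by simp
  have e1: "P x *v xp = S - q x u" using kkt unfolding smoothed_KKT_def S_def
    by (simp add: algebra_simps eq_diff_eq)
  have "xp = Pi *v (P x *v xp)" by (simp add: matrix_vector_mul_assoc L)
  then have xp: "xp = Pi *v S - Pi *v q x u" using e1 by (simp add: matrix_vector_mult_diff_distrib)
  have nu: "nu i = J i x *v (xp - x) + vector [phi i x, 0, 0]"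
    using kkt unfolding smoothed_KKT_def by blast
  have "J i x *v (Pi *v S) = (\<Sum>j\<in>UNIV. (J i x ** Pi ** transpose (J j x)) *v lam j)"
    unfolding S_def
    unfolding linear_sum[OF matrix_vector_mul_linear]
    by (rule sum.cong) (simp_all only: matrix_vector_mul_assoc matrix_mul_assoc)
  also have "\<dots> = (J i x ** Pi ** transpose (J i x)) *v lam i"
    by (subst sum.remove[of _ i]) (auto intro!: sum.neutral simp: decoupled Pi_def)
  finally have s: "J i x *v (Pi *v S) = (J i x ** Pi ** transpose (J i x)) *v lam i" .
  have s2: "(J i x ** Pi) *v S = (J i x ** Pi ** transpose (J i x)) *v lam i"
    using s by (simp only: matrix_vector_mul_assoc)
  have neg: "- (J i x ** Pi) *v q x u = - ((J i x ** Pi) *v q x u)"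
    by (simp add: vec_eq_iff matrix_vector_mult_def sum_negf)
  show ?thesis
    unfolding neg nu xp Pi_def[symmetric]
    by (simp add: matrix_vector_mult_diff_distrib s2 matrix_vector_mul_assoc)
qed

theorem lemma1:
  fixes P :: "real^'n \<Rightarrow> real^'n^'n"
    and q :: "real^'n \<Rightarrow> real^'m \<Rightarrow> real^'n"
    and J :: "'c::finite \<Rightarrow> real^'n \<Rightarrow> real^'n^3"
    and phi :: "'c \<Rightarrow> real^'n \<Rightarrow> real"
    and mu :: "'c \<Rightarrow> real"
    and x :: "real^'n" and u :: "real^'m"
  assumes spd: "\<And>y. sym_pos_def_mat (P y)"
    and mu_pos: "\<And>i. mu i > 0"
    and decoupled: "\<And>i j. i \<noteq> j \<Longrightarrow> J i x ** matrix_inv (P x) ** transpose (J j x) = 0"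
    and k1: "kappa1 > 0" and k2: "kappa2 > 0"
    and kkt1: "smoothed_KKT P q J phi mu x u kappa1 xp1 nu1 lam1"
    and kkt2: "smoothed_KKT P q J phi mu x u kappa2 xp2 nu2 lam2"
  shows "nu1 i - (J i x ** matrix_inv (P x) ** transpose (J i x)) *v lam1 i =
         nu2 i - (J i x ** matrix_inv (P x) ** transpose (J i x)) *v lam2 i"
  using key[OF spd decoupled kkt1] key[OF spd decoupled kkt2] by simp

end
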